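(* Let $u\colon A\to\mathbb{R}$ be a locally Lipschitz function on an open set $A\subset\mathbb{R}^n$, and let $\psi\in C^2(I)$ satisfy $\psi'(t)>0$ for every $t\in I$, where $I\subset\mathbb{R}$ is an open interval containing $u(A)$. If the composite function $v=\psi\circ u$ is concave on every convex subset of $A$, then $u$ is locally semiconcave in $A$.
   Context: A function $u$ is locally semiconcave in $A$ if for every compact $K\subset A$ there is a constant $C=C(K)\ge 0$ such that $u(\lambda x+(1-\lambda)y)\ge \lambda u(x)+(1-\lambda)u(y)-C\frac{\lambda(1-\lambda)}{2}|x-y|^2$ for all segments $[x,y]\subset K$ and all $\lambda\in[0,1]$ (equivalently, $D^2u\le C\,I$ in the sense of distributions locally). *)

theory Defs
  imports "HOL-Analysis.Analysis"
begin

definition locally_lipschitz_on :: "'a::euclidean_space set \<Rightarrow> ('a \<Rightarrow> real) \<Rightarrow> bool" where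
  "locally_lipschitz_on A u \<longleftrightarrow>
     (\<forall>x\<in>A. \<exists>e>0. \<exists>L. L-lipschitz_on (ball x e \<inter> A) u)"

definition locally_semiconcave :: "'a::euclidean_space set \<Rightarrow> ('a \<Rightarrow> real) \<Rightarrow> bool" where
  "locally_semiconcave A u \<longleftrightarrow>
     (\<forall>K. compact K \<and> K \<subseteq> A \<longrightarrow>
        (\<exists>C\<ge>0. \<forall>x y. closed_segment x y \<subseteq> K \<longrightarrow>
           (\<forall>l\<in>{0..1::real}.
              u (l *\<^sub>R x + (1 - l) *\<^sub>R y) \<ge>
                l * u x + (1 - l) * u y - C * (l * (1 - l) / 2) * (norm (x - y))\<^sup>2)))"

end

theory Submission
  imports Defs
begin

lemma lip_on_compact:
  fixes A K :: "'a::euclidean_space set" and u :: "'a \<Rightarrow> real"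
  assumes "locally_lipschitz_on A u" "compact K" "K \<subseteq> A"
  obtains L where "L-lipschitz_on K u"
proof -
  have ll: "local_lipschitz {0::real} K (\<lambda>_. u)"
  proof (rule local_lipschitzI)
    fix t :: real and x assume "t \<in> {0}" "x \<in> K"
    then have "x \<in> A" using assms by auto
    then obtain e L where e: "e > 0" "L-lipschitz_on (ball x e \<inter> A) u"
      using assms(1) unfolding locally_lipschitz_on_def by blast
    have "cball x (e/2) \<inter> K \<subseteq> ball x e \<inter> A" using e(1) assms(3) by auto
    then have "L-lipschitz_on (cball x (e/2) \<inter> K) u" using e(2) lipschitz_on_subset by blast
    then show "\<exists>u'>0. \<exists>L. \<forall>t\<in>cball t u' \<inter> {0}. L-lipschitz_on (cball x u' \<inter> K) u"
      using e(1) by (intro exI[of _ "e/2"]) auto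
  qed
  obtain L where "\<And>t. t \<in> {0::real} \<Longrightarrow> L-lipschitz_on K u"
    using local_lipschitz_compact_implies_lipschitz[OF ll assms(2) compact_sing] by auto
  then show ?thesis using that by blast
qed

lemma taylor2_lower:
  fixes \<psi> \<psi>' \<psi>'' :: "real \<Rightarrow> real"
  assumes "\<forall>t\<in>{p..q}. (\<psi> has_real_derivative \<psi>' t) (at t)"
    and "\<forall>t\<in>{p..q}. (\<psi>' has_real_derivative \<psi>'' t) (at t)"
    and "\<forall>t\<in>{p..q}. \<bar>\<psi>'' t\<bar> \<le> B"
    and "a \<in> {p..q}" "m \<in> {p..q}"
  shows "\<psi> a \<ge> \<psi> m + \<psi>' m * (a - m) - B / 2 * (a - m)^2"
proof (cases "a = m")
  case True then show ?thesis by simp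
next
  case False
  define diff where "diff = (\<lambda>n::nat. if n = 0 then \<psi> else if n = 1 then \<psi>' else \<psi>'')"
  have D: "\<forall>k t. k < 2 \<and> p \<le> t \<and> t \<le> q \<longrightarrow> DERIV (diff k) t :> diff (Suc k) t"
  proof (intro allI impI)
    fix k t assume h: "k < (2::nat) \<and> p \<le> t \<and> t \<le> q"
    then have "k = 0 \<or> k = 1" by auto
    then show "DERIV (diff k) t :> diff (Suc k) t"
      using h assms(1,2) by (auto simp: diff_def)
  qed
  obtain t where t: "(if a < m then a < t \<and> t < m else m < t \<and> t < a)"
    "\<psi> a = (\<Sum>k<2. (diff k m / fact k) * (a - m)^k) + (diff 2 t / fact 2) * (a - m)^2"
    using Taylor[of 2 diff \<psi> p q m a, OF _ _ D] assms(4,5) False by (auto simp: diff_def)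
  have tin: "t \<in> {p..q}" using t(1) assms(4,5) by (auto split: if_splits)
  have eq: "\<psi> a = \<psi> m + \<psi>' m * (a - m) + \<psi>'' t / 2 * (a - m)^2"
    using t(2) by (simp add: diff_def numeral_2_eq_2 lessThan_Suc)
  have "- B / 2 * (a - m)^2 \<le> \<psi>'' t / 2 * (a - m)^2"
    proof (intro mult_right_mono)
    have "\<bar>\<psi>'' t\<bar> \<le> B" using assms(3) tin by blast
    then show "- B / 2 \<le> \<psi>'' t / 2" by (simp add: abs_le_iff)
  qed simp
  then show ?thesis using eq by linarith
qed


theorem proposition2p1:
  fixes A :: "'a::euclidean_space set" and u :: "'a \<Rightarrow> real"
    and I :: "real set" and \<psi> \<psi>' \<psi>'' :: "real \<Rightarrow> real"
  assumes "open A"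
    and "locally_lipschitz_on A u"
    and "open I" and "is_interval I" and "u ` A \<subseteq> I"
    and "\<forall>t\<in>I. (\<psi> has_real_derivative \<psi>' t) (at t)"
    and "\<forall>t\<in>I. (\<psi>' has_real_derivative \<psi>'' t) (at t)"
    and "continuous_on I \<psi>''"
    and "\<forall>t\<in>I. \<psi>' t > 0"
    and "\<forall>S. convex S \<and> S \<subseteq> A \<longrightarrow> concave_on S (\<psi> \<circ> u)"
  shows "locally_semiconcave A u"
  unfolding locally_semiconcave_def
proof (intro allI impI)
  fix K assume K: "compact K \<and> K \<subseteq> A"
  show "\<exists>C\<ge>0. \<forall>x y. closed_segment x y \<subseteq> K \<longrightarrow>
           (\<forall>l\<in>{0..1::real}.
              u (l *\<^sub>R x + (1 - l) *\<^sub>R y) \<ge>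
                l * u x + (1 - l) * u y - C * (l * (1 - l) / 2) * (norm (x - y))\<^sup>2)"
  proof (cases "K = {}")
    case True
    then show ?thesis by (intro exI[of _ 0]) auto
  next
    case False
    obtain L where L: "L-lipschitz_on K u"
      using lip_on_compact[OF assms(2)] K by blast
    have L0: "L \<ge> 0" using L lipschitz_on_nonneg by blast
    have cu: "continuous_on K u" using L lipschitz_on_continuous_on by blast
    obtain xp where xp: "xp \<in> K" "\<forall>z\<in>K. u xp \<le> u z"
      using continuous_attains_inf[OF _ False cu] K by blast
    obtain xq where xq: "xq \<in> K" "\<forall>z\<in>K. u z \<le> u xq"
      using continuous_attains_sup[OF _ False cu] K by blast
    define p where "p = u xp"
    define q where "q = u xq"
    have pI: "p \<in> I" "q \<in> I" using xp(1) xq(1) K assms(5) unfolding p_def q_def by auto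
    have JI: "{p..q} \<subseteq> I"
    proof
      fix t assume "t \<in> {p..q}"
      then show "t \<in> I" using mem_is_interval_1_I[OF assms(4) pI(1) pI(2), of t] by simp
    qed
    have uK: "\<And>z. z \<in> K \<Longrightarrow> u z \<in> {p..q}" using xp(2) xq(2) unfolding p_def q_def by simp
    have pq: "p \<le> q" using uK[OF xp(1)] by auto
    have Jne: "{p..q} \<noteq> {}" using pq by auto
    have c2: "continuous_on {p..q} (\<lambda>t. \<bar>\<psi>'' t\<bar>)"
      using continuous_on_subset[OF assms(8) JI] by (intro continuous_intros)
    obtain t1 where t1: "t1 \<in> {p..q}" "\<forall>t\<in>{p..q}. \<bar>\<psi>'' t\<bar> \<le> \<bar>\<psi>'' t1\<bar>"
      using continuous_attains_sup[OF compact_Icc Jne c2] by blast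
    define B where "B = \<bar>\<psi>'' t1\<bar>"
    have B0: "B \<ge> 0" unfolding B_def by simp
    have c1: "continuous_on {p..q} \<psi>'"
      using assms(7) JI by (intro continuous_at_imp_continuous_on ballI DERIV_isCont) blast
    obtain t0 where t0: "t0 \<in> {p..q}" "\<forall>t\<in>{p..q}. \<psi>' t0 \<le> \<psi>' t"
      using continuous_attains_inf[OF compact_Icc Jne c1] by blast
    define \<mu> where "\<mu> = \<psi>' t0"
    have mu0: "\<mu> > 0" using t0 JI assms(9) \<mu>_def by auto
    have d1: "\<forall>t\<in>{p..q}. (\<psi> has_real_derivative \<psi>' t) (at t)" using assms(6) JI by blast
    have d2: "\<forall>t\<in>{p..q}. (\<psi>' has_real_derivative \<psi>'' t) (at t)" using assms(7) JI by blast
    have Bb: "\<forall>t\<in>{p..q}. \<bar>\<psi>'' t\<bar> \<le> B" using t1 B_def by blast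
    define C where "C = B * L^2 / \<mu>"
    have C0: "C \<ge> 0" unfolding C_def using B0 mu0 by simp
    show ?thesis
    proof (intro exI[of _ C] conjI allI impI ballI)
      show "C \<ge> 0" by fact
      fix x y l assume seg: "closed_segment x y \<subseteq> K" and l: "l \<in> {0..1::real}"
      define z where "z = l *\<^sub>R x + (1 - l) *\<^sub>R y"
      have xK: "x \<in> K" "y \<in> K" using seg by auto
      have zseg: "z \<in> closed_segment x y"
        unfolding z_def closed_segment_def using l
        by (intro CollectI exI[of _ "1 - l"]) (auto simp: algebra_simps)
      have zK: "z \<in> K" using zseg seg by auto
      define a where "a = u x"
      define b where "b = u y"
      define c where "c = u z"
      define m where "m = l * a + (1 - l) * b"
      have aJ: "a \<in> {p..q}" "b \<in> {p..q}" "c \<in> {p..q}"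
        using uK xK zK a_def b_def c_def by auto
      have mJ: "m \<in> {p..q}"
      proof -
        have "l * a + (1 - l) * b \<ge> l * p + (1 - l) * p"
          using l aJ by (intro add_mono mult_left_mono) auto
        moreover have "l * a + (1 - l) * b \<le> l * q + (1 - l) * q"
          using l aJ by (intro add_mono mult_left_mono) auto
        ultimately show ?thesis unfolding m_def by (auto simp: algebra_simps)
      qed
      have conc: "concave_on (closed_segment x y) (\<psi> \<circ> u)"
        using assms(10) seg K by auto
      have "(\<psi> \<circ> u) ((1 - (1 - l)) *\<^sub>R x + (1 - l) *\<^sub>R y) \<ge> (1 - (1 - l)) * (\<psi> \<circ> u) x + (1 - l) * (\<psi> \<circ> u) y"
        using concave_onD[OF conc, of "1 - l" x y] l by auto
      then have hc: "\<psi> c \<ge> l * \<psi> a + (1 - l) * \<psi> b"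
        by (simp add: a_def b_def c_def z_def)
      have ta: "\<psi> a \<ge> \<psi> m + \<psi>' m * (a - m) - B / 2 * (a - m)^2"
        using taylor2_lower[OF d1 d2 Bb aJ(1) mJ] .
      have tb: "\<psi> b \<ge> \<psi> m + \<psi>' m * (b - m) - B / 2 * (b - m)^2"
        using taylor2_lower[OF d1 d2 Bb aJ(2) mJ] .
      define D where "D = B / 2 * (l * (1 - l) * (a - b)^2)"
      have "l * \<psi> a + (1 - l) * \<psi> b \<ge> l * (\<psi> m + \<psi>' m * (a - m) - B / 2 * (a - m)^2)
            + (1 - l) * (\<psi> m + \<psi>' m * (b - m) - B / 2 * (b - m)^2)"
        using l ta tb by (intro add_mono mult_left_mono) auto
      also have "l * (\<psi> m + \<psi>' m * (a - m) - B / 2 * (a - m)^2)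
            + (1 - l) * (\<psi> m + \<psi>' m * (b - m) - B / 2 * (b - m)^2) = \<psi> m - D"
        unfolding D_def m_def power2_eq_square by (simp add: field_simps)
      finally have hm: "\<psi> c \<ge> \<psi> m - D" using hc by linarith
      have ll0: "l * (1 - l) \<ge> 0" using l by auto
      have lipab: "\<bar>a - b\<bar> \<le> L * norm (x - y)"
        using lipschitz_onD[OF L xK] by (simp add: a_def b_def dist_real_def dist_norm)
      have sq: "(a - b)^2 \<le> L^2 * (norm (x - y))^2"
      proof -
        have "(a - b)^2 = \<bar>a - b\<bar>^2" by simp
        also have "\<dots> \<le> (L * norm (x - y))^2" using lipab by (intro power_mono) auto
        finally show ?thesis by (simp add: power_mult_distrib)
      qed
      have "c \<ge> m - C * (l * (1 - l) / 2) * (norm (x - y))\<^sup>2"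
      proof (cases "c \<ge> m")
        case True
        have "C * (l * (1 - l) / 2) * (norm (x - y))\<^sup>2 \<ge> 0" using C0 ll0 by simp
        then show ?thesis using True by linarith
      next
        case False
        then have cm: "c < m" by simp
        obtain w where w: "c < w" "w < m" "\<psi> m - \<psi> c = (m - c) * \<psi>' w"
          using MVT2[OF cm, of \<psi> \<psi>'] d1 aJ(3) mJ by force
        have wJ: "w \<in> {p..q}" using w aJ(3) mJ by auto
        have "\<mu> * (m - c) \<le> \<psi>' w * (m - c)"
          using t0 wJ \<mu>_def cm by (intro mult_right_mono) auto
        also have "\<dots> \<le> D" using w(3) hm by (simp add: algebra_simps)
        finally have "\<mu> * (m - c) \<le> D" .
        then have mc: "m - c \<le> D / \<mu>" using mu0 by (simp add: field_simps)
        have "D \<le> B / 2 * (l * (1 - l) * (L^2 * (norm (x - y))^2))"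
          unfolding D_def using B0 ll0 sq by (intro mult_left_mono) auto
        also have "\<dots> = \<mu> * (C * (l * (1 - l) / 2) * (norm (x - y))\<^sup>2)"
          unfolding C_def using mu0 by (simp add: field_simps)
        finally have "D / \<mu> \<le> C * (l * (1 - l) / 2) * (norm (x - y))\<^sup>2"
          using mu0 by (simp add: field_simps)
        then show ?thesis using mc by linarith
      qed
      then show "u (l *\<^sub>R x + (1 - l) *\<^sub>R y) \<ge>
                l * u x + (1 - l) * u y - C * (l * (1 - l) / 2) * (norm (x - y))\<^sup>2"
        by (simp add: c_def z_def m_def a_def b_def)
    qed
  qed
qed

end
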